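(* Let $X$ be an Alexandroff space and $Y$ a topological space. Let $\alpha$ be the cardinality of the set of connected components of $X$ (equivalently of $X/\Re_X$) and $\beta$ the cardinality of the set of closed points of $Y$. Then $$\mathrm{card}\{f\in Y^X : f \text{ has closed graph}\}=\beta^\alpha\le \mathrm{card}(\mathcal{C}(X,Y)),$$ where $\beta^\alpha$ denotes cardinal exponentiation.
   Context: For a map $f:X\to Y$ its graph is $G_f=\{(x,f(x)):x\in X\}$; $f$ has closed graph if $G_f$ is closed in $X\times Y$ (product topology). A point $y\in Y$ is closed if $\{y\}$ is a closed set. $Y^X$ is the set of all maps $X\to Y$ and $\mathcal{C}(X,Y)$ is the set of continuous maps $X\to Y$. A topological space $X$ is an Alexandroff space if the intersection of every nonempty family of open subsets of $X$ is open; equivalently, every point $a\in X$ has a smallest open neighbourhood, denoted $V_a$. On an Alexandroff space $X$, $\Re_X$ is the equivalence relation: $(x,y)\in\Re_X$ iff there exist $x=x_1,\ldots,x_n=y$ in $X$ with $V_{x_i}\cap V_{x_{i+1}}\neq\emptyset$ for all $i$. *)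

theory Defs
  imports "HOL-Analysis.Analysis"
begin

definition alexandroff_space :: "'a topology \<Rightarrow> bool" where
  "alexandroff_space X \<longleftrightarrow>
     (\<forall>\<F>. \<F> \<noteq> {} \<and> (\<forall>U\<in>\<F>. openin X U) \<longrightarrow> openin X (\<Inter>\<F>))"

definition graph_of :: "'a topology \<Rightarrow> ('a \<Rightarrow> 'b) \<Rightarrow> ('a \<times> 'b) set" where
  "graph_of X f = {(x, f x) | x. x \<in> topspace X}"

definition has_closed_graph :: "'a topology \<Rightarrow> 'b topology \<Rightarrow> ('a \<Rightarrow> 'b) \<Rightarrow> bool" where
  "has_closed_graph X Y f \<longleftrightarrow> closedin (prod_topology X Y) (graph_of X f)"

definition closed_points :: "'b topology \<Rightarrow> 'b set" where
  "closed_points Y = {y \<in> topspace Y. closedin Y {y}}"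

end

theory Submission
  imports Defs
begin

definition minnb :: "'a topology \<Rightarrow> 'a \<Rightarrow> 'a set" where
  "minnb X x = \<Inter>{U. openin X U \<and> x \<in> U}"

lemma minnb_props:
  assumes A: "alexandroff_space X" and x: "x \<in> topspace X"
  shows "openin X (minnb X x)" "x \<in> minnb X x" "\<And>U. openin X U \<Longrightarrow> x \<in> U \<Longrightarrow> minnb X x \<subseteq> U"
    "minnb X x \<subseteq> topspace X"
proof -
  have "{U. openin X U \<and> x \<in> U} \<noteq> {}" using x by auto
  then show "openin X (minnb X x)" using A unfolding alexandroff_space_def minnb_def by auto
  show "x \<in> minnb X x" unfolding minnb_def by auto
  show "\<And>U. openin X U \<Longrightarrow> x \<in> U \<Longrightarrow> minnb X x \<subseteq> U" unfolding minnb_def by auto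
  then show "minnb X x \<subseteq> topspace X" using x by auto
qed

lemma minnb_connected:
  assumes A: "alexandroff_space X" and x: "x \<in> topspace X"
  shows "connectedin X (minnb X x)"
proof -
  note P = minnb_props[OF A x]
  have key: "E = minnb X x" if hE: "openin (subtopology X (minnb X x)) E" "x \<in> E" for E
  proof -
    obtain T where T: "openin X T" "E = T \<inter> minnb X x" using hE(1) unfolding openin_subtopology by auto
    then have "x \<in> T" using hE(2) by auto
    then show ?thesis using P(3)[OF T(1)] T by auto
  qed
  have "connected_space (subtopology X (minnb X x))"
    unfolding connected_space_def
  proof clarify
    fix E1 E2
    assume h: "openin (subtopology X (minnb X x)) E1" "openin (subtopology X (minnb X x)) E2"
      "topspace (subtopology X (minnb X x)) \<subseteq> E1 \<union> E2" "E1 \<inter> E2 = {}" "E1 \<noteq> {}" "E2 \<noteq> {}"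
    have ts: "topspace (subtopology X (minnb X x)) = minnb X x" using P(4) by auto
    have s1: "E1 \<subseteq> minnb X x" "E2 \<subseteq> minnb X x" using openin_subset[OF h(1)] openin_subset[OF h(2)] ts by auto
    have "x \<in> E1 \<or> x \<in> E2" using h(3) ts P(2) by auto
    then show False
    proof
      assume "x \<in> E1" then have "E1 = minnb X x" using key h(1) by auto
      then show False using h(4,6) s1 by auto
    next
      assume "x \<in> E2" then have "E2 = minnb X x" using key h(2) by auto
      then show False using h(4,5) s1 by auto
    qed
  qed
  then show ?thesis unfolding connectedin_def using P(4) by auto
qed

lemma minnb_comp:
  assumes A: "alexandroff_space X" and x: "x \<in> topspace X"
  shows "minnb X x \<subseteq> connected_component_of_set X x"
  using connected_component_of_maximal[OF minnb_connected[OF A x] minnb_props(2)[OF A x]] .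

lemma cg_iff:
  assumes A: "alexandroff_space X" and f: "f \<in> topspace X \<rightarrow>\<^sub>E topspace Y"
  shows "has_closed_graph X Y f \<longleftrightarrow>
     (\<forall>x\<in>topspace X. closedin Y {f x} \<and> (\<forall>x'\<in>connected_component_of_set X x. f x' = f x))"
proof
  assume "has_closed_graph X Y f"
  then have cl: "closedin (prod_topology X Y) (graph_of X f)" unfolding has_closed_graph_def .
  then have op: "openin (prod_topology X Y) (topspace X \<times> topspace Y - graph_of X f)"
    unfolding closedin_def by simp
  have P: "\<exists>W. openin Y W \<and> z \<in> W \<and> (\<forall>x'\<in>minnb X x. f x' \<notin> W)"
    if x: "x \<in> topspace X" and z: "z \<in> topspace Y" "z \<noteq> f x" for x z
  proof -
    have xz: "(x,z) \<in> topspace X \<times> topspace Y - graph_of X f"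
      using x z unfolding graph_of_def by auto
    then obtain U W where UW: "openin X U" "openin Y W" "x \<in> U" "z \<in> W"
       "U \<times> W \<subseteq> topspace X \<times> topspace Y - graph_of X f"
      using op[unfolded openin_prod_topology_alt, rule_format, OF xz] by blast
    have "\<forall>x'\<in>minnb X x. f x' \<notin> W"
    proof (intro ballI notI)
      fix x' assume "x' \<in> minnb X x" "f x' \<in> W"
      then have "x' \<in> U" "x' \<in> topspace X" using minnb_props[OF A x] UW by auto
      then have "(x', f x') \<in> U \<times> W" "(x', f x') \<in> graph_of X f"
        using \<open>f x' \<in> W\<close> unfolding graph_of_def by auto
      then show False using UW(5) by auto
    qed
    then show ?thesis using UW by blast
  qed
  have constV: "f x' = f x" if x: "x \<in> topspace X" and x': "x' \<in> minnb X x" for x x'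
  proof (rule ccontr)
    assume ne: "f x' \<noteq> f x"
    have "x' \<in> topspace X" using minnb_props(4)[OF A x] x' by auto
    then have "f x' \<in> topspace Y" using f by auto
    then obtain W where "openin Y W" "f x' \<in> W" "\<forall>x''\<in>minnb X x. f x'' \<notin> W"
      using P[OF x \<open>f x' \<in> topspace Y\<close> ne] by blast
    then show False using x' by auto
  qed
  show "\<forall>x\<in>topspace X. closedin Y {f x} \<and> (\<forall>x'\<in>connected_component_of_set X x. f x' = f x)"
  proof (intro ballI conjI)
    fix x assume x: "x \<in> topspace X"
    have fx: "f x \<in> topspace Y" using f x by auto
    have "openin Y (topspace Y - {f x})"
      unfolding openin_subopen[of Y "topspace Y - {f x}"]
    proof
      fix z assume "z \<in> topspace Y - {f x}"
      then obtain W where W: "openin Y W" "z \<in> W" "\<forall>x'\<in>minnb X x. f x' \<notin> W"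
        using P[OF x] by blast
      then have "f x \<notin> W" using minnb_props(2)[OF A x] by auto
      then show "\<exists>T. openin Y T \<and> z \<in> T \<and> T \<subseteq> topspace Y - {f x}"
        using W openin_subset[OF W(1)] by blast
    qed
    then show "closedin Y {f x}" unfolding closedin_def using fx by auto
    define S where "S = {y \<in> topspace X. f y = f x}"
    have "openin X S"
      unfolding openin_subopen[of X S]
    proof
      fix y assume y: "y \<in> S"
      then have yt: "y \<in> topspace X" unfolding S_def by auto
      have "minnb X y \<subseteq> S" using constV[OF yt] minnb_props(4)[OF A yt] y unfolding S_def by auto
      then show "\<exists>T. openin X T \<and> y \<in> T \<and> T \<subseteq> S" using minnb_props(1,2)[OF A yt] by blast
    qed
    moreover have "openin X (topspace X - S)"
      unfolding openin_subopen[of X "topspace X - S"]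
    proof
      fix y assume y: "y \<in> topspace X - S"
      then have yt: "y \<in> topspace X" by auto
      have "minnb X y \<subseteq> topspace X - S" using constV[OF yt] minnb_props(4)[OF A yt] y unfolding S_def by auto
      then show "\<exists>T. openin X T \<and> y \<in> T \<and> T \<subseteq> topspace X - S" using minnb_props(1,2)[OF A yt] by blast
    qed
    then have "closedin X S" unfolding closedin_def S_def by auto
    ultimately have "connected_component_of_set X x \<subseteq> S \<or> disjnt (connected_component_of_set X x) S"
      using connectedin_clopen_cases[OF connectedin_connected_component_of \<open>closedin X S\<close>] by blast
    moreover have "x \<in> connected_component_of_set X x" "x \<in> S"
      using x connected_component_of_refl[of X x] unfolding S_def by auto
    ultimately have "connected_component_of_set X x \<subseteq> S" by (auto simp: disjnt_def)
    fix x' assume "x' \<in> connected_component_of_set X x"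
    then show "f x' = f x" using \<open>connected_component_of_set X x \<subseteq> S\<close> unfolding S_def by auto
  qed
next
  assume H: "\<forall>x\<in>topspace X. closedin Y {f x} \<and> (\<forall>x'\<in>connected_component_of_set X x. f x' = f x)"
  have sub: "graph_of X f \<subseteq> topspace X \<times> topspace Y" using f unfolding graph_of_def by auto
  have "openin (prod_topology X Y) (topspace X \<times> topspace Y - graph_of X f)"
    unfolding openin_prod_topology_alt
  proof (intro allI impI)
    fix a z assume az: "(a, z) \<in> topspace X \<times> topspace Y - graph_of X f"
    then have a: "a \<in> topspace X" and z: "z \<in> topspace Y" "z \<noteq> f a" unfolding graph_of_def by auto
    have o1: "openin Y (topspace Y - {f a})" using H a unfolding closedin_def by auto
    have "minnb X a \<times> (topspace Y - {f a}) \<subseteq> topspace X \<times> topspace Y - graph_of X f"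
    proof
      fix p assume "p \<in> minnb X a \<times> (topspace Y - {f a})"
      then obtain x' w where p: "p = (x', w)" and x': "x' \<in> minnb X a" and w: "w \<in> topspace Y" "w \<noteq> f a" by auto
      have "f x' = f a" using H a minnb_comp[OF A a] x' by auto
      then show "p \<in> topspace X \<times> topspace Y - graph_of X f"
        using w x' p minnb_props(4)[OF A a] unfolding graph_of_def by auto
    qed
    then show "\<exists>U V. openin X U \<and> openin Y V \<and> a \<in> U \<and> z \<in> V \<and> U \<times> V \<subseteq> topspace X \<times> topspace Y - graph_of X f"
      using minnb_props(1,2)[OF A a] o1 z by blast
  qed
  then show "has_closed_graph X Y f" unfolding has_closed_graph_def closedin_def using sub by simp
qed

lemma cg_cont:
  assumes A: "alexandroff_space X" and f: "f \<in> topspace X \<rightarrow>\<^sub>E topspace Y"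
    and cg: "has_closed_graph X Y f"
  shows "continuous_map X Y f"
proof -
  have H: "\<forall>x\<in>topspace X. (\<forall>x'\<in>connected_component_of_set X x. f x' = f x)"
    using cg_iff[OF A f] cg by auto
  show ?thesis unfolding continuous_map_def
  proof (intro conjI allI impI)
    show "f \<in> topspace X \<rightarrow> topspace Y" using f by auto
    fix U assume "openin Y U"
    show "openin X {x \<in> topspace X. f x \<in> U}"
      unfolding openin_subopen[of X "{x \<in> topspace X. f x \<in> U}"]
    proof
      fix y assume y: "y \<in> {x \<in> topspace X. f x \<in> U}"
      then have yt: "y \<in> topspace X" by auto
      have "minnb X y \<subseteq> {x \<in> topspace X. f x \<in> U}"
        using H yt minnb_comp[OF A yt] minnb_props(4)[OF A yt] y by fastforce
      then show "\<exists>T. openin X T \<and> y \<in> T \<and> T \<subseteq> {x \<in> topspace X. f x \<in> U}"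
        using minnb_props(1,2)[OF A yt] by blast
    qed
  qed
qed

theorem corollary3p6:
  fixes X :: "'a topology" and Y :: "'b topology"
  assumes "alexandroff_space X"
  shows "(card_of {f \<in> topspace X \<rightarrow>\<^sub>E topspace Y. has_closed_graph X Y f},
          BNF_Cardinal_Arithmetic.cexp (card_of (closed_points Y)) (card_of (connected_components_of X))) \<in> ordIso
       \<and> (BNF_Cardinal_Arithmetic.cexp (card_of (closed_points Y)) (card_of (connected_components_of X)),
          card_of {f \<in> topspace X \<rightarrow>\<^sub>E topspace Y. continuous_map X Y f}) \<in> ordLeq"
proof -
  note A = assms
  define CG where "CG = {f \<in> topspace X \<rightarrow>\<^sub>E topspace Y. has_closed_graph X Y f}"
  define CM where "CM = {f \<in> topspace X \<rightarrow>\<^sub>E topspace Y. continuous_map X Y f}"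
  define F where "F = Func (connected_components_of X) (closed_points Y)"
  define \<Phi> where "\<Phi> = (\<lambda>(g::'a set \<Rightarrow> 'b) x. if x \<in> topspace X then g (connected_component_of_set X x) else undefined)"
  have ce: "BNF_Cardinal_Arithmetic.cexp (card_of (closed_points Y)) (card_of (connected_components_of X)) = card_of F"
    unfolding cexp_def F_def Field_card_of ..
  have compeq: "connected_component_of_set X x' = connected_component_of_set X x"
    if "x \<in> topspace X" "x' \<in> connected_component_of_set X x" for x x'
  proof -
    have "connected_component_of X x = connected_component_of X x'"
      using that connected_component_of_equiv[of X x x'] by simp
    then show ?thesis by simp
  qed
  have inj: "inj_on \<Phi> F"
  proof (rule inj_onI)
    fix g1 g2 assume g: "g1 \<in> F" "g2 \<in> F" "\<Phi> g1 = \<Phi> g2"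
    show "g1 = g2"
    proof
      fix C show "g1 C = g2 C"
      proof (cases "C \<in> connected_components_of X")
        case True
        then obtain x where x: "x \<in> topspace X" "C = connected_component_of_set X x"
          unfolding connected_components_of_def by auto
        have "\<Phi> g1 x = \<Phi> g2 x" using g(3) by simp
        then show ?thesis using x unfolding \<Phi>_def by simp
      next
        case False then show ?thesis using g(1,2) unfolding F_def Func_def by auto
      qed
    qed
  qed
  have img: "\<Phi> ` F = CG"
  proof
    show "\<Phi> ` F \<subseteq> CG"
    proof
      fix h assume "h \<in> \<Phi> ` F"
      then obtain g where g: "g \<in> F" "h = \<Phi> g" by auto
      have gv: "g (connected_component_of_set X x) \<in> closed_points Y" if "x \<in> topspace X" for x
        using g(1) that connected_component_in_connected_components_of[of X x] unfolding F_def Func_def by auto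
      have hf: "h \<in> topspace X \<rightarrow>\<^sub>E topspace Y" using gv unfolding g(2) \<Phi>_def closed_points_def by auto
      have "has_closed_graph X Y h"
        unfolding cg_iff[OF A hf]
      proof (intro ballI conjI)
        fix x assume x: "x \<in> topspace X"
        show "closedin Y {h x}" using gv[OF x] x unfolding g(2) \<Phi>_def closed_points_def by auto
        fix x' assume x': "x' \<in> connected_component_of_set X x"
        show "h x' = h x"
          using compeq[OF x x'] x x' connected_component_of_subset_topspace unfolding g(2) \<Phi>_def by fastforce
      qed
      then show "h \<in> CG" using hf unfolding CG_def by auto
    qed
  next
    show "CG \<subseteq> \<Phi> ` F"
    proof
      fix f assume fCG: "f \<in> CG"
      then have f: "f \<in> topspace X \<rightarrow>\<^sub>E topspace Y" and cg: "has_closed_graph X Y f" unfolding CG_def by auto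
      have H: "\<forall>x\<in>topspace X. closedin Y {f x} \<and> (\<forall>x'\<in>connected_component_of_set X x. f x' = f x)"
        using cg_iff[OF A f] cg by auto
      define g where "g = (\<lambda>C. if C \<in> connected_components_of X then f (SOME x. x \<in> C) else undefined)"
      have some: "(SOME y. y \<in> connected_component_of_set X x) \<in> connected_component_of_set X x"
        if "x \<in> topspace X" for x
        using someI[of "\<lambda>y. y \<in> connected_component_of_set X x" x] connected_component_of_refl[of X x] that by simp
      have "g \<in> F"
        unfolding F_def Func_def
      proof (intro CollectI conjI ballI allI impI)
        fix C assume C: "C \<in> connected_components_of X"
        then obtain x where x: "x \<in> topspace X" "C = connected_component_of_set X x"
          unfolding connected_components_of_def by auto
        have "(SOME y. y \<in> C) \<in> topspace X" using subsetD[OF connected_component_of_subset_topspace[of X x] some[OF x(1)]] x(2) by simp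
        then show "g C \<in> closed_points Y" using C H f unfolding g_def closed_points_def by auto
      next
        fix C assume "C \<notin> connected_components_of X" then show "g C = undefined" unfolding g_def by auto
      qed
      moreover have "\<Phi> g = f"
      proof
        fix x show "\<Phi> g x = f x"
        proof (cases "x \<in> topspace X")
          case True
          then show ?thesis using H some[OF True] connected_component_in_connected_components_of[of X x, THEN iffD2, OF True]
            unfolding \<Phi>_def g_def by auto
        next
          case False then show ?thesis using f unfolding \<Phi>_def by auto
        qed
      qed
      ultimately show "f \<in> \<Phi> ` F" by auto
    qed
  qed
  have "bij_betw \<Phi> F CG" using inj img unfolding bij_betw_def by auto
  then have iso: "(card_of F, card_of CG) \<in> ordIso" unfolding card_of_ordIso[symmetric] by blast
  have "CG \<subseteq> CM" using cg_cont[OF A] unfolding CG_def CM_def by auto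
  then have le: "(card_of CG, card_of CM) \<in> ordLeq" by (rule card_of_mono1)
  show ?thesis
    unfolding ce CG_def[symmetric] CM_def[symmetric]
    using ordIso_symmetric[OF iso] ordIso_ordLeq_trans[OF iso le] by simp
qed

end
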